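(* In the setting of the context, for each $u\in U$ let $\mathbf{I}_u$ indicate whether $u$ is matched by MMP-ALG after the $T$ online rounds, and let $x^*_u=\sum_{e\in E(u)}x^*_e$. Then, when $T\to\infty$ and $|U|=o(\sqrt{T})$, the random variables $\{\mathbf{I}_u:u\in U\}$ are asymptotically independent and each satisfies $\Pr[\mathbf{I}_u=1]\to 1-e^{-x^*_u}$.
   Context: Bipartite graph $G=(U,V,E)$; online rounds $t=1,\dots,T$, in each of which independently at most one $v\in V$ arrives, $v$ with probability $p_v$, $\sum_v p_v\le1$, $r_v=Tp_v\in[0,1]$. Each $u\in U$ can be matched at most once. $E(w)$ denotes the set of edges incident to $w$. $\mathbf{x}^*\in[0,1]^E$ satisfies $\sum_{e\in E(v)}x^*_e\le r_v$ for all $v\in V$ and $\sum_{e\in E(u)}x^*_e\le1$ for all $u\in U$. MMP-ALG: when $v$ arrives, sample at most one edge $e\in E(v)$, each $e$ with probability $x^*_e/r_v$; if $e=(u,v)$ is sampled and $u$ is still unmatched, match $e$, otherwise skip. *)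

theory Defs
  imports "HOL-Probability.Probability" "HOL-Library.Landau_Symbols"
begin

text \<open>Edges are pairs (u,v) with u in U (offline side) and v in V (online side).\<close>

definition edges_at_v :: "('u \<times> 'v) set \<Rightarrow> 'v \<Rightarrow> ('u \<times> 'v) set" where
  "edges_at_v E v = {e \<in> E. snd e = v}"

definition edges_at_u :: "('u \<times> 'v) set \<Rightarrow> 'u \<Rightarrow> ('u \<times> 'v) set" where
  "edges_at_u E u = {e \<in> E. fst e = u}"

definition xstar_u :: "('u \<times> 'v) set \<Rightarrow> (('u \<times> 'v) \<Rightarrow> real) \<Rightarrow> 'u \<Rightarrow> real" where
  "xstar_u E x u = (\<Sum>e\<in>edges_at_u E u. x e)"

definition arrival_pmf :: "'v set \<Rightarrow> ('v \<Rightarrow> real) \<Rightarrow> 'v option pmf" where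
  "arrival_pmf V p = embed_pmf (\<lambda>w. case w of
       None \<Rightarrow> 1 - sum p V
     | Some v \<Rightarrow> (if v \<in> V then p v else 0))"

definition edge_pmf :: "('u \<times> 'v) set \<Rightarrow> (('u \<times> 'v) \<Rightarrow> real) \<Rightarrow> real \<Rightarrow> 'v \<Rightarrow> ('u \<times> 'v) option pmf" where
  "edge_pmf E x r v = embed_pmf (\<lambda>w. case w of
       None \<Rightarrow> 1 - (\<Sum>e\<in>edges_at_v E v. x e) / r
     | Some e \<Rightarrow> (if e \<in> edges_at_v E v then x e / r else 0))"

definition mmp_round :: "'v set \<Rightarrow> ('u \<times> 'v) set \<Rightarrow> ('v \<Rightarrow> real) \<Rightarrow> (('u \<times> 'v) \<Rightarrow> real) \<Rightarrow> nat
    \<Rightarrow> ('u \<times> 'v) option pmf" where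
  "mmp_round V E p x T = bind_pmf (arrival_pmf V p) (\<lambda>w. case w of
       None \<Rightarrow> return_pmf None
     | Some v \<Rightarrow> edge_pmf E x (real T * p v) v)"

definition mmp_step :: "('u \<times> 'v) set \<Rightarrow> ('u \<times> 'v) option \<Rightarrow> ('u \<times> 'v) set" where
  "mmp_step M w = (case w of
       None \<Rightarrow> M
     | Some e \<Rightarrow> (if fst e \<in> fst ` M then M else insert e M))"

fun mmp_run :: "'v set \<Rightarrow> ('u \<times> 'v) set \<Rightarrow> ('v \<Rightarrow> real) \<Rightarrow> (('u \<times> 'v) \<Rightarrow> real) \<Rightarrow> nat
    \<Rightarrow> nat \<Rightarrow> ('u \<times> 'v) set pmf" where
  "mmp_run V E p x T 0 = return_pmf {}"
| "mmp_run V E p x T (Suc n) =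
     bind_pmf (mmp_run V E p x T n) (\<lambda>M. map_pmf (mmp_step M) (mmp_round V E p x T))"

text \<open>Joint law of (I_u)_u, represented as the random set of matched U-vertices after T rounds.\<close>
definition matched_pmf :: "'v set \<Rightarrow> ('u \<times> 'v) set \<Rightarrow> ('v \<Rightarrow> real) \<Rightarrow> (('u \<times> 'v) \<Rightarrow> real) \<Rightarrow> nat
    \<Rightarrow> 'u set pmf" where
  "matched_pmf V E p x T = map_pmf (\<lambda>M. fst ` M) (mmp_run V E p x T T)"

definition marg :: "'u set pmf \<Rightarrow> 'u \<Rightarrow> real" where
  "marg Q u = measure_pmf.prob Q {S. u \<in> S}"

definition prod_marg_mass :: "'u set \<Rightarrow> 'u set pmf \<Rightarrow> 'u set \<Rightarrow> real" where
  "prod_marg_mass U Q S = (\<Prod>u\<in>U. if u \<in> S then marg Q u else 1 - marg Q u)"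

definition tv_from_indep :: "'u set \<Rightarrow> 'u set pmf \<Rightarrow> real" where
  "tv_from_indep U Q = (1/2) * (\<Sum>S\<in>Pow U. \<bar>pmf Q S - prod_marg_mass U Q S\<bar>)"

end

theory Submission
  imports Defs
begin


definition L1 :: "'a set \<Rightarrow> 'a pmf \<Rightarrow> 'a pmf \<Rightarrow> real" where
  "L1 W P Q = (\<Sum>w\<in>W. \<bar>pmf P w - pmf Q w\<bar>)"

lemma pmf_bind_finite:
  assumes "finite W" "set_pmf P \<subseteq> W"
  shows "pmf (bind_pmf P f) w = (\<Sum>s\<in>W. pmf (f s) w * pmf P s)"
  unfolding pmf_bind using assms by (intro integral_measure_pmf_real) auto

lemma L1_bind:
  assumes W: "finite W" and P: "set_pmf P \<subseteq> W" and Q: "set_pmf Q \<subseteq> W"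
    and f: "\<And>s. s \<in> W \<Longrightarrow> set_pmf (f s) \<subseteq> W"
    and c: "\<And>s. s \<in> W \<Longrightarrow> L1 W (f s) (g s) \<le> c"
  shows "L1 W (bind_pmf P f) (bind_pmf Q g) \<le> L1 W P Q + c"
proof -
  have "L1 W (bind_pmf P f) (bind_pmf Q g) =
     (\<Sum>w\<in>W. \<bar>(\<Sum>s\<in>W. pmf (f s) w * pmf P s) - (\<Sum>s\<in>W. pmf (g s) w * pmf Q s)\<bar>)"
    unfolding L1_def using W P Q by (simp add: pmf_bind_finite)
  also have "\<dots> \<le> (\<Sum>w\<in>W. \<Sum>s\<in>W. (pmf (f s) w * \<bar>pmf P s - pmf Q s\<bar> + pmf Q s * \<bar>pmf (f s) w - pmf (g s) w\<bar>))"
  proof (rule sum_mono)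
    fix w
    have "\<bar>(\<Sum>s\<in>W. pmf (f s) w * pmf P s) - (\<Sum>s\<in>W. pmf (g s) w * pmf Q s)\<bar>
       = \<bar>\<Sum>s\<in>W. (pmf (f s) w * pmf P s - pmf (g s) w * pmf Q s)\<bar>"
      by (simp add: sum_subtractf)
    also have "\<dots> \<le> (\<Sum>s\<in>W. \<bar>pmf (f s) w * pmf P s - pmf (g s) w * pmf Q s\<bar>)"
      by (rule sum_abs)
    also have "\<dots> \<le> (\<Sum>s\<in>W. (pmf (f s) w * \<bar>pmf P s - pmf Q s\<bar> + pmf Q s * \<bar>pmf (f s) w - pmf (g s) w\<bar>))"
    proof (rule sum_mono)
      fix s
      have e: "pmf (f s) w * pmf P s - pmf (g s) w * pmf Q s
          = pmf (f s) w * (pmf P s - pmf Q s) + pmf Q s * (pmf (f s) w - pmf (g s) w)"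
        by (simp add: algebra_simps)
      show "\<bar>pmf (f s) w * pmf P s - pmf (g s) w * pmf Q s\<bar> \<le> pmf (f s) w * \<bar>pmf P s - pmf Q s\<bar> + pmf Q s * \<bar>pmf (f s) w - pmf (g s) w\<bar>"
        unfolding e by (rule order.trans[OF abs_triangle_ineq]) (simp add: abs_mult)
    qed
    finally show "\<bar>(\<Sum>s\<in>W. pmf (f s) w * pmf P s) - (\<Sum>s\<in>W. pmf (g s) w * pmf Q s)\<bar> \<le> \<dots>" .
  qed
  also have "\<dots> = (\<Sum>s\<in>W. (\<Sum>w\<in>W. pmf (f s) w) * \<bar>pmf P s - pmf Q s\<bar> + pmf Q s * L1 W (f s) (g s))"
  proof -
    have "(\<Sum>w\<in>W. \<Sum>s\<in>W. (pmf (f s) w * \<bar>pmf P s - pmf Q s\<bar> + pmf Q s * \<bar>pmf (f s) w - pmf (g s) w\<bar>))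
       = (\<Sum>s\<in>W. \<Sum>w\<in>W. (pmf (f s) w * \<bar>pmf P s - pmf Q s\<bar> + pmf Q s * \<bar>pmf (f s) w - pmf (g s) w\<bar>))"
      by (rule sum.swap)
    also have "\<dots> = (\<Sum>s\<in>W. (\<Sum>w\<in>W. pmf (f s) w) * \<bar>pmf P s - pmf Q s\<bar> + pmf Q s * L1 W (f s) (g s))"
      unfolding L1_def by (intro sum.cong refl) (simp add: sum.distrib sum_distrib_left sum_distrib_right)
    finally show ?thesis .
  qed
  also have "\<dots> = (\<Sum>s\<in>W. \<bar>pmf P s - pmf Q s\<bar> + pmf Q s * L1 W (f s) (g s))"
    using W f by (intro sum.cong refl) (simp add: sum_pmf_eq_1)
  also have "\<dots> \<le> (\<Sum>s\<in>W. \<bar>pmf P s - pmf Q s\<bar> + pmf Q s * c)"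
    using c by (intro sum_mono add_left_mono mult_left_mono) auto
  also have "\<dots> = L1 W P Q + c"
    using W Q by (simp add: L1_def sum.distrib sum_distrib_right[symmetric] sum_pmf_eq_1)
  finally show ?thesis .
qed



definition Bset :: "'u set \<Rightarrow> ('u \<Rightarrow> real) \<Rightarrow> 'u set pmf" where
  "Bset U a = map_pmf (\<lambda>f. {u\<in>U. f u}) (Pi_pmf U False (\<lambda>u. bernoulli_pmf (a u)))"

lemma set_Bset: "finite U \<Longrightarrow> set_pmf (Bset U a) \<subseteq> Pow U"
  unfolding Bset_def by auto

lemma pmf_Bset:
  assumes U: "finite U" and S: "S \<subseteq> U" and a: "\<And>u. u \<in> U \<Longrightarrow> 0 \<le> a u \<and> a u \<le> 1"
  shows "pmf (Bset U a) S = (\<Prod>u\<in>U. if u \<in> S then a u else 1 - a u)"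
proof -
  let ?P = "Pi_pmf U False (\<lambda>u. bernoulli_pmf (a u))"
  let ?h = "\<lambda>u. u \<in> S"
  have "pmf (Bset U a) S = measure ?P ((\<lambda>f. {u\<in>U. f u}) -` {S})"
    unfolding Bset_def pmf_map ..
  also have "\<dots> = measure ?P ((\<lambda>f. {u\<in>U. f u}) -` {S} \<inter> set_pmf ?P)"
    by (simp add: measure_Int_set_pmf)
  also have "(\<lambda>f. {u\<in>U. f u}) -` {S} \<inter> set_pmf ?P = {?h} \<inter> set_pmf ?P"
  proof -
    have "\<And>f. f \<in> set_pmf ?P \<Longrightarrow> (\<forall>x. x \<notin> U \<longrightarrow> f x = False)"
      using set_Pi_pmf_subset[OF U, of False "\<lambda>u. bernoulli_pmf (a u)"] by blast
    then show ?thesis using S by (auto simp: fun_eq_iff)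
  qed
  also have "measure ?P \<dots> = measure ?P {?h}"
    by (simp add: measure_Int_set_pmf)
  also have "\<dots> = pmf ?P ?h" by (simp add: measure_pmf_single)
  also have "\<dots> = (\<Prod>u\<in>U. pmf (bernoulli_pmf (a u)) (u \<in> S))"
    using U S by (subst pmf_Pi) auto
  also have "\<dots> = (\<Prod>u\<in>U. if u \<in> S then a u else 1 - a u)"
    using a by (intro prod.cong refl) auto
  finally show ?thesis .
qed

lemma bern0: "bernoulli_pmf 0 = return_pmf False"
  by (rule pmf_eqI) (auto simp: pmf_return split: split_indicator)

lemma Bset_zero: "finite U \<Longrightarrow> Bset U (\<lambda>_. 0) = return_pmf {}"
  unfolding Bset_def by (simp add: bern0)

lemma bern_or:
  assumes "0 \<le> a" "a \<le> 1" "0 \<le> b" "b \<le> 1"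
  shows "bernoulli_pmf (1 - (1 - a) * (1 - b)) =
     bind_pmf (bernoulli_pmf a) (\<lambda>x. bind_pmf (bernoulli_pmf b) (\<lambda>y. return_pmf (x \<or> y)))"
proof (rule pmf_eqI)
  fix i :: bool
  have c: "0 \<le> 1 - (1 - a) * (1 - b)" "1 - (1 - a) * (1 - b) \<le> 1"
    using assms by (auto simp: mult_le_one)
  show "pmf (bernoulli_pmf (1 - (1 - a) * (1 - b))) i = pmf (bind_pmf (bernoulli_pmf a) (\<lambda>x. bind_pmf (bernoulli_pmf b) (\<lambda>y. return_pmf (x \<or> y)))) i"
    using assms c by (cases i) (simp_all add: pmf_bind algebra_simps)
qed

lemma Bset_union:
  assumes U: "finite U" and a: "\<And>u. u \<in> U \<Longrightarrow> 0 \<le> a u \<and> a u \<le> 1"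
    and b: "\<And>u. u \<in> U \<Longrightarrow> 0 \<le> b u \<and> b u \<le> 1"
  shows "bind_pmf (Bset U a) (\<lambda>S. map_pmf (\<lambda>C. S \<union> C) (Bset U b)) = Bset U (\<lambda>u. 1 - (1 - a u) * (1 - b u))"
proof -
  let ?g = "\<lambda>f. {u\<in>U. f u}"
  have "Pi_pmf U False (\<lambda>u. bernoulli_pmf (1 - (1 - a u) * (1 - b u))) =
     Pi_pmf U False (\<lambda>u. bind_pmf (bernoulli_pmf (a u)) (\<lambda>x. bind_pmf (bernoulli_pmf (b u)) (\<lambda>y. return_pmf (x \<or> y))))"
    using a b by (intro Pi_pmf_cong refl bern_or) auto
  also have "\<dots> = bind_pmf (Pi_pmf U False (\<lambda>u. bernoulli_pmf (a u)))
      (\<lambda>f. Pi_pmf U False (\<lambda>u. bind_pmf (bernoulli_pmf (b u)) (\<lambda>y. return_pmf (f u \<or> y))))"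
    using U by (rule Pi_pmf_bind)
  also have "\<dots> = bind_pmf (Pi_pmf U False (\<lambda>u. bernoulli_pmf (a u)))
      (\<lambda>f. bind_pmf (Pi_pmf U False (\<lambda>u. bernoulli_pmf (b u))) (\<lambda>h. return_pmf (\<lambda>u. if u \<in> U then f u \<or> h u else False)))"
  proof (intro bind_pmf_cong refl)
    fix f :: "'a \<Rightarrow> bool"
    have "Pi_pmf U False (\<lambda>u. bind_pmf (bernoulli_pmf (b u)) (\<lambda>y. return_pmf (f u \<or> y)))
       = bind_pmf (Pi_pmf U False (\<lambda>u. bernoulli_pmf (b u))) (\<lambda>h. Pi_pmf U False (\<lambda>u. return_pmf (f u \<or> h u)))"
      using U by (rule Pi_pmf_bind)
    also have "\<dots> = bind_pmf (Pi_pmf U False (\<lambda>u. bernoulli_pmf (b u))) (\<lambda>h. return_pmf (\<lambda>u. if u \<in> U then f u \<or> h u else False))"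
      using U by simp
    finally show "Pi_pmf U False (\<lambda>u. bind_pmf (bernoulli_pmf (b u)) (\<lambda>y. return_pmf (f u \<or> y))) = \<dots>" .
  qed
  finally have eq: "Pi_pmf U False (\<lambda>u. bernoulli_pmf (1 - (1 - a u) * (1 - b u))) = \<dots>" .
  show ?thesis
    unfolding Bset_def eq
    apply (simp add: map_bind_pmf bind_map_pmf map_pmf_def bind_assoc_pmf bind_return_pmf)
    apply (intro bind_pmf_cong refl arg_cong[where f=return_pmf])
    by auto
qed



lemma pmf_embed_opt:
  fixes f :: "'a \<Rightarrow> real"
  assumes A: "finite A" and nn: "\<And>a. a \<in> A \<Longrightarrow> 0 \<le> f a" and s: "sum f A \<le> 1"
  shows "pmf (embed_pmf (\<lambda>w. case w of None \<Rightarrow> 1 - sum f A | Some a \<Rightarrow> if a \<in> A then f a else 0)) w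
       = (case w of None \<Rightarrow> 1 - sum f A | Some a \<Rightarrow> if a \<in> A then f a else 0)"
proof (rule pmf_embed_pmf)
  let ?g = "\<lambda>w. case w of None \<Rightarrow> 1 - sum f A | Some a \<Rightarrow> if a \<in> A then f a else 0"
  show "\<And>w. 0 \<le> ?g w" using nn s by (auto split: option.splits)
  have "(\<integral>\<^sup>+ w. ennreal (?g w) \<partial>count_space UNIV) = (\<Sum>w\<in>insert None (Some ` A). ennreal (?g w))"
    using A by (intro nn_integral_count_space') (auto split: option.splits)
  also have "\<dots> = ennreal (\<Sum>w\<in>insert None (Some ` A). ?g w)"
    using nn s by (intro sum_ennreal) (auto split: option.splits)
  also have "(\<Sum>w\<in>insert None (Some ` A). ?g w) = 1"
    using A by (simp add: sum.reindex)
  finally show "(\<integral>\<^sup>+ w. ennreal (?g w) \<partial>count_space UNIV) = 1" by simp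
qed

lemma weier:
  fixes q :: "'a \<Rightarrow> real"
  assumes "finite A" "\<And>a. a \<in> A \<Longrightarrow> 0 \<le> q a \<and> q a \<le> 1"
  shows "1 - sum q A \<le> (\<Prod>a\<in>A. 1 - q a)"
  using assms
proof (induction A rule: finite_induct)
  case (insert b A)
  have IH: "1 - sum q A \<le> (\<Prod>a\<in>A. 1 - q a)" using insert by auto
  have qb: "0 \<le> q b" "q b \<le> 1" using insert by auto
  have S: "0 \<le> sum q A" using insert by (intro sum_nonneg) auto
  have "1 - sum q (insert b A) = 1 - q b - sum q A" using insert by simp
  also have "\<dots> \<le> (1 - q b) * (1 - sum q A)" using qb S by (simp add: algebra_simps)
  also have "\<dots> \<le> (1 - q b) * (\<Prod>a\<in>A. 1 - q a)" using IH qb by (intro mult_left_mono) auto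
  also have "\<dots> = (\<Prod>a\<in>insert b A. 1 - q a)" using insert by simp
  finally show ?case .
qed simp

lemma bool_pmf_eqI:
  assumes "pmf M True = pmf N True"
  shows "M = N"
proof (rule pmf_eqI)
  fix i :: bool
  have "\<And>K :: bool pmf. pmf K False = 1 - pmf K True"
  proof -
    fix K :: "bool pmf"
    have "(\<Sum>b\<in>UNIV. pmf K b) = 1" by (rule sum_pmf_eq_1) auto
    then show "pmf K False = 1 - pmf K True" by (simp add: UNIV_bool)
  qed
  then show "pmf M i = pmf N i" using assms by (cases i) auto
qed

context
  fixes U :: "'u set" and V :: "'v set" and E :: "('u \<times> 'v) set"
    and p :: "'v \<Rightarrow> real" and x :: "('u \<times> 'v) \<Rightarrow> real" and T :: nat
  assumes finU: "finite U" and finV: "finite V"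
    and E_sub: "E \<subseteq> U \<times> V"
    and p_nonneg: "\<And>v. v \<in> V \<Longrightarrow> p v \<ge> 0"
    and p_sum: "sum p V \<le> 1"
    and x_range: "\<And>e. e \<in> E \<Longrightarrow> 0 \<le> x e \<and> x e \<le> 1"
    and x_v: "\<And>v. v \<in> V \<Longrightarrow> (\<Sum>e\<in>edges_at_v E v. x e) \<le> real T * p v"
    and x_u: "\<And>u. u \<in> U \<Longrightarrow> (\<Sum>e\<in>edges_at_u E u. x e) \<le> 1"
    and T_pos: "T > 0"
begin

lemma finE: "finite E"
  using finite_subset[OF E_sub] finU finV by blast

lemma pmf_arrival: "pmf (arrival_pmf V p) (Some v) = (if v \<in> V then p v else 0)"
  unfolding arrival_pmf_def
  by (subst pmf_embed_opt[OF finV]) (use p_nonneg p_sum in auto)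

lemma pmf_edge:
  assumes v: "v \<in> V"
  shows "pmf (edge_pmf E x (real T * p v) v) (Some e) = (if e \<in> edges_at_v E v then x e / (real T * p v) else 0)"
proof -
  have fin: "finite (edges_at_v E v)" using finE unfolding edges_at_v_def by auto
  have nn: "\<And>e. e \<in> edges_at_v E v \<Longrightarrow> 0 \<le> x e / (real T * p v)"
    using x_range p_nonneg[OF v] by (auto simp: edges_at_v_def)
  have s: "(\<Sum>e\<in>edges_at_v E v. x e / (real T * p v)) \<le> 1"
  proof (cases "real T * p v = 0")
    case True
    then have "\<And>e. x e / (real T * p v) = 0" by simp
    then show ?thesis by (simp only: sum.neutral_const)
  next
    case False
    then have pos: "real T * p v > 0" using p_nonneg[OF v] by auto
    have "(\<Sum>e\<in>edges_at_v E v. x e / (real T * p v)) = (\<Sum>e\<in>edges_at_v E v. x e) / (real T * p v)"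
      by (simp add: sum_divide_distrib)
    also have "\<dots> \<le> 1" using x_v[OF v] pos by simp
    finally show ?thesis .
  qed
  have "edge_pmf E x (real T * p v) v = embed_pmf (\<lambda>w. case w of None \<Rightarrow> 1 - (\<Sum>e\<in>edges_at_v E v. x e / (real T * p v))
          | Some e \<Rightarrow> if e \<in> edges_at_v E v then x e / (real T * p v) else 0)"
    unfolding edge_pmf_def by (simp add: sum_divide_distrib)
  then show ?thesis
    by (simp add: pmf_embed_opt[OF fin nn s])
qed

lemma pmf_round: "pmf (mmp_round V E p x T) (Some e) = (if e \<in> E then x e / real T else 0)"
proof -
  let ?k = "\<lambda>w. case w of None \<Rightarrow> return_pmf None | Some v \<Rightarrow> edge_pmf E x (real T * p v) v"
  have "pmf (mmp_round V E p x T) (Some e) = (\<Sum>w\<in>{Some (snd e)}. pmf (?k w) (Some e) * pmf (arrival_pmf V p) w)"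
    unfolding mmp_round_def pmf_bind
  proof (rule integral_measure_pmf_real)
    fix w assume w: "w \<in> set_pmf (arrival_pmf V p)" "pmf (?k w) (Some e) \<noteq> 0"
    show "w \<in> {Some (snd e)}"
    proof (cases w)
      case None then show ?thesis using w by simp
    next
      case (Some v)
      have "pmf (arrival_pmf V p) (Some v) \<noteq> 0" using w Some by (simp add: pmf_eq_0_set_pmf)
      then have "v \<in> V" unfolding pmf_arrival by (auto split: if_splits)
      then show ?thesis using w Some pmf_edge[of v e] by (auto simp: edges_at_v_def split: if_splits)
    qed
  qed simp
  also have "\<dots> = pmf (edge_pmf E x (real T * p (snd e)) (snd e)) (Some e) * pmf (arrival_pmf V p) (Some (snd e))"
    by simp
  also have "\<dots> = (if e \<in> E then x e / real T else 0)"
  proof (cases "snd e \<in> V")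
    case False
    then have "e \<notin> E" using E_sub by auto
    then show ?thesis using False by (simp add: pmf_arrival)
  next
    case True
    note pe = pmf_edge[OF True, of e]
    show ?thesis
    proof (cases "e \<in> E")
      case False then show ?thesis using True pe by (simp add: edges_at_v_def)
    next
      case eE: True
      have ev: "e \<in> edges_at_v E (snd e)" using eE by (simp add: edges_at_v_def)
      show ?thesis
      proof (cases "p (snd e) = 0")
        case True
        have fin: "finite (edges_at_v E (snd e))" using finE unfolding edges_at_v_def by auto
        have "x e \<le> (\<Sum>e\<in>edges_at_v E (snd e). x e)"
          using ev fin x_range by (intro member_le_sum) (auto simp: edges_at_v_def)
        then have "x e = 0" using x_v[OF \<open>snd e \<in> V\<close>] True x_range[OF eE] by simp
        then show ?thesis using True pe ev pmf_arrival[of "snd e"] by simp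
      next
        case False
        then show ?thesis using pe ev eE \<open>snd e \<in> V\<close> T_pos by (simp add: pmf_arrival)
      qed
    qed
  qed
  finally show ?thesis .
qed

definition hit :: "('u \<times> 'v) option \<Rightarrow> 'u set" where
  "hit w = (case w of None \<Rightarrow> {} | Some e \<Rightarrow> {fst e})"

definition Hr :: "'u set pmf" where "Hr = map_pmf hit (mmp_round V E p x T)"

lemma set_round: "set_pmf (mmp_round V E p x T) \<subseteq> insert None (Some ` E)"
proof
  fix w assume w: "w \<in> set_pmf (mmp_round V E p x T)"
  show "w \<in> insert None (Some ` E)"
  proof (cases w)
    case (Some e) then show ?thesis using w pmf_round[of e] by (auto simp: set_pmf_eq split: if_splits)
  qed simp
qed

lemma set_Hr: "set_pmf Hr \<subseteq> insert {} ((\<lambda>u. {u}) ` U)"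
  using set_round E_sub unfolding Hr_def hit_def by (fastforce split: option.splits)

lemma pmf_Hr: "pmf Hr {u} = xstar_u E x u / real T"
proof -
  have fin: "finite (insert None (Some ` E))" using finE by simp
  have "pmf Hr {u} = measure (mmp_round V E p x T) (hit -` {{u}})"
    unfolding Hr_def pmf_map ..
  also have "\<dots> = measure (mmp_round V E p x T) (hit -` {{u}} \<inter> set_pmf (mmp_round V E p x T))"
    by (simp add: measure_Int_set_pmf)
  also have "hit -` {{u}} \<inter> set_pmf (mmp_round V E p x T) = Some ` edges_at_u E u \<inter> set_pmf (mmp_round V E p x T)"
    using set_round by (auto simp: hit_def edges_at_u_def split: option.splits)
  also have "measure (mmp_round V E p x T) \<dots> = measure (mmp_round V E p x T) (Some ` edges_at_u E u)"
    by (simp add: measure_Int_set_pmf)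
  also have "\<dots> = (\<Sum>w\<in>Some ` edges_at_u E u. pmf (mmp_round V E p x T) w)"
    using finE by (intro measure_measure_pmf_finite) (auto simp: edges_at_u_def)
  also have "\<dots> = (\<Sum>e\<in>edges_at_u E u. x e / real T)"
    by (subst sum.reindex) (auto simp: pmf_round edges_at_u_def)
  also have "\<dots> = xstar_u E x u / real T"
    by (simp add: xstar_u_def sum_divide_distrib)
  finally show ?thesis .
qed

lemma matched_Suc:
  "map_pmf ((`) fst) (mmp_run V E p x T (Suc n)) =
   bind_pmf (map_pmf ((`) fst) (mmp_run V E p x T n)) (\<lambda>S. map_pmf (\<lambda>C. S \<union> C) Hr)"
proof -
  have st: "fst ` mmp_step M w = fst ` M \<union> hit w" for M :: "('u \<times> 'v) set" and w
    by (auto simp: mmp_step_def hit_def split: option.splits)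
  show ?thesis
    by (simp add: map_bind_pmf bind_map_pmf Hr_def pmf.map_comp o_def st)
qed


definition q :: "'u \<Rightarrow> real" where "q u = xstar_u E x u / real T"

lemma xstar_range: "u \<in> U \<Longrightarrow> 0 \<le> xstar_u E x u \<and> xstar_u E x u \<le> 1"
  using x_u[of u] x_range unfolding xstar_u_def edges_at_u_def
  by (auto intro!: sum_nonneg)

lemma q_range: "u \<in> U \<Longrightarrow> 0 \<le> q u \<and> q u \<le> 1"
  using xstar_range[of u] T_pos unfolding q_def
  by (auto simp: divide_le_eq_1)

lemma q_le: "u \<in> U \<Longrightarrow> q u \<le> 1 / real T"
  using xstar_range[of u] T_pos unfolding q_def by (auto simp: divide_right_mono)

lemma pmf_Hr_q: "pmf Hr {u} = q u"
  unfolding q_def by (rule pmf_Hr)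

lemma pmf_Hr_empty: "pmf Hr {} = 1 - sum q U"
proof -
  have "(\<Sum>w\<in>insert {} ((\<lambda>u. {u}) ` U). pmf Hr w) = 1"
    using finU set_Hr by (intro sum_pmf_eq_1) auto
  moreover have "(\<Sum>w\<in>insert {} ((\<lambda>u. {u}) ` U). pmf Hr w) = pmf Hr {} + (\<Sum>w\<in>(\<lambda>u. {u}) ` U. pmf Hr w)"
    using finU by (subst sum.insert) auto
  moreover have "(\<Sum>w\<in>(\<lambda>u. {u}) ` U. pmf Hr w) = sum q U"
    by (subst sum.reindex) (auto simp: inj_on_def pmf_Hr_q)
  ultimately show ?thesis by simp
qed

lemma Hr_vs_B: "L1 (Pow U) Hr (Bset U q) \<le> 2 * (sum q U)^2"
proof -
  let ?a = "pmf Hr" and ?b = "pmf (Bset U q)" and ?Q = "sum q U"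
  have Q0: "0 \<le> ?Q" using q_range by (intro sum_nonneg) auto
  have sa: "(\<Sum>w\<in>Pow U. ?a w) = 1" using finU set_Hr by (intro sum_pmf_eq_1) auto
  have sb: "(\<Sum>w\<in>Pow U. ?b w) = 1" using finU set_Bset by (intro sum_pmf_eq_1) auto
  have "L1 (Pow U) Hr (Bset U q) = (\<Sum>w\<in>Pow U. 2 * max (?a w - ?b w) 0 - (?a w - ?b w))"
    unfolding L1_def by (intro sum.cong refl) (simp add: max_def abs_if)
  also have "\<dots> = 2 * (\<Sum>w\<in>Pow U. max (?a w - ?b w) 0)"
    using sa sb by (simp add: sum_subtractf sum_distrib_left)
  also have "(\<Sum>w\<in>Pow U. max (?a w - ?b w) 0) \<le> (\<Sum>w\<in>Pow U. \<Sum>u\<in>U. if w = {u} then q u * ?Q else 0)"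
  proof (rule sum_mono)
    fix w assume w: "w \<in> Pow U"
    have bw: "0 \<le> ?b w" by simp
    show "max (?a w - ?b w) 0 \<le> (\<Sum>u\<in>U. if w = {u} then q u * ?Q else 0)"
    proof (cases "w = {}")
      case True
      have "?b w = (\<Prod>u\<in>U. 1 - q u)" using True finU q_range by (simp add: pmf_Bset)
      moreover have "1 - ?Q \<le> (\<Prod>u\<in>U. 1 - q u)" using finU q_range by (rule weier)
      ultimately show ?thesis using True pmf_Hr_empty by (simp add: sum_nonneg)
    next
      case False
      show ?thesis
      proof (cases "\<exists>u. w = {u}")
        case True
        then obtain u where u: "w = {u}" by blast
        with w have uU: "u \<in> U" by auto
        have rhs: "(\<Sum>v\<in>U. if w = {v} then q v * ?Q else 0) = q u * ?Q"
          using u uU finU by (simp add: sum.delta)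
        have "?b w = (\<Prod>v\<in>U. if v \<in> {u} then q v else 1 - q v)"
          using u uU finU q_range by (simp add: pmf_Bset)
        also have "\<dots> = q u * (\<Prod>v\<in>U - {u}. 1 - q v)"
          using uU finU by (subst prod.remove[of U u]) (auto intro!: prod.cong)
        finally have b: "?b w = q u * (\<Prod>v\<in>U - {u}. 1 - q v)" .
        have "1 - sum q (U - {u}) \<le> (\<Prod>v\<in>U - {u}. 1 - q v)"
          using finU q_range by (intro weier) auto
        moreover have "sum q (U - {u}) \<le> ?Q" using finU q_range by (intro sum_mono2) auto
        ultimately have "1 - ?Q \<le> (\<Prod>v\<in>U - {u}. 1 - q v)" by simp
        then have "q u * (1 - ?Q) \<le> ?b w" using b q_range[OF uU] by (simp add: mult_left_mono)
        then have "?a w - ?b w \<le> q u * ?Q" using u pmf_Hr_q[of u] by (simp add: algebra_simps)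
        moreover have "0 \<le> q u * ?Q" using q_range[OF uU] Q0 by simp
        ultimately show ?thesis using rhs by simp
      next
        case nsing: False
        have "w \<notin> set_pmf Hr" using set_Hr False nsing by auto
        then have "?a w = 0" by (simp add: set_pmf_eq)
        moreover have "0 \<le> (\<Sum>v\<in>U. if w = {v} then q v * ?Q else 0)"
          using q_range Q0 by (intro sum_nonneg) auto
        ultimately show ?thesis using bw by simp
      qed
    qed
  qed
  also have "(\<Sum>w\<in>Pow U. \<Sum>u\<in>U. if w = {u} then q u * ?Q else 0) = (\<Sum>u\<in>U. \<Sum>w\<in>Pow U. if w = {u} then q u * ?Q else 0)"
    by (rule sum.swap)
  also have "\<dots> = (\<Sum>u\<in>U. q u * ?Q)"
    using finU by (intro sum.cong refl) (simp add: sum.delta)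
  also have "\<dots> = ?Q ^ 2" by (simp add: sum_distrib_right power2_eq_square)
  finally show ?thesis by simp
qed



definition mt :: "nat \<Rightarrow> 'u set pmf" where "mt n = map_pmf ((`) fst) (mmp_run V E p x T n)"
definition an :: "nat \<Rightarrow> 'u \<Rightarrow> real" where "an n u = 1 - (1 - q u) ^ n"

lemma mt_Suc: "mt (Suc n) = bind_pmf (mt n) (\<lambda>S. map_pmf (\<lambda>C. S \<union> C) Hr)"
  unfolding mt_def by (rule matched_Suc)

lemma mt_0: "mt 0 = return_pmf {}"
  unfolding mt_def by simp

lemma set_Hr': "set_pmf Hr \<subseteq> Pow U"
  using set_Hr by auto

lemma set_mt: "set_pmf (mt n) \<subseteq> Pow U"
proof (induction n)
  case 0 then show ?case by (simp add: mt_0)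
next
  case (Suc n) then show ?case using set_Hr' by (auto simp: mt_Suc)
qed

lemma an_range: "u \<in> U \<Longrightarrow> 0 \<le> an n u \<and> an n u \<le> 1"
  using q_range[of u] unfolding an_def by (auto intro: power_le_one)

lemma an_Suc: "(\<lambda>u. 1 - (1 - an n u) * (1 - q u)) = an (Suc n)"
  unfolding an_def by (auto simp: fun_eq_iff algebra_simps)

lemma Bset_an_Suc: "Bset U (an (Suc n)) = bind_pmf (Bset U (an n)) (\<lambda>S. map_pmf (\<lambda>C. S \<union> C) (Bset U q))"
  using Bset_union[OF finU, of "an n" q] an_range q_range an_Suc by simp

lemma Bset_an_0: "Bset U (an 0) = return_pmf {}"
proof -
  have "an 0 = (\<lambda>_. 0)" by (simp add: fun_eq_iff an_def)
  then show ?thesis using Bset_zero[OF finU] by simp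
qed

lemma main_ind: "L1 (Pow U) (mt n) (Bset U (an n)) \<le> real n * (2 * (sum q U)^2)"
proof (induction n)
  case 0 then show ?case by (simp add: mt_0 Bset_an_0 L1_def)
next
  case (Suc n)
  have "L1 (Pow U) (mt (Suc n)) (Bset U (an (Suc n))) \<le> L1 (Pow U) (mt n) (Bset U (an n)) + 2 * (sum q U)^2"
    unfolding mt_Suc Bset_an_Suc
  proof (rule L1_bind)
    show "finite (Pow U)" using finU by simp
    show "set_pmf (mt n) \<subseteq> Pow U" by (rule set_mt)
    show "set_pmf (Bset U (an n)) \<subseteq> Pow U" using finU by (rule set_Bset)
    show "set_pmf (map_pmf ((\<union>) s) Hr) \<subseteq> Pow U" if "s \<in> Pow U" for s
      using that set_Hr' by auto
    show "L1 (Pow U) (map_pmf ((\<union>) s) Hr) (map_pmf ((\<union>) s) (Bset U q)) \<le> 2 * (sum q U)^2"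
      if s: "s \<in> Pow U" for s
    proof -
      have "L1 (Pow U) (bind_pmf Hr (\<lambda>C. return_pmf (s \<union> C))) (bind_pmf (Bset U q) (\<lambda>C. return_pmf (s \<union> C)))
          \<le> L1 (Pow U) Hr (Bset U q) + 0"
        using finU set_Hr' set_Bset[OF finU] s by (intro L1_bind) (auto simp: L1_def)
      then show ?thesis using Hr_vs_B by (simp add: map_pmf_def)
    qed
  qed
  then show ?case using Suc by (simp add: algebra_simps)
qed

lemma map_Hr: "u \<in> U \<Longrightarrow> map_pmf (\<lambda>S. u \<in> S) Hr = bernoulli_pmf (q u)"
proof (rule bool_pmf_eqI)
  assume u: "u \<in> U"
  have "pmf (map_pmf (\<lambda>S. u \<in> S) Hr) True = measure Hr ((\<lambda>S. u \<in> S) -` {True})"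
    by (rule pmf_map)
  also have "\<dots> = measure Hr ((\<lambda>S. u \<in> S) -` {True} \<inter> set_pmf Hr)"
    by (simp add: measure_Int_set_pmf)
  also have "(\<lambda>S. u \<in> S) -` {True} \<inter> set_pmf Hr = {{u}} \<inter> set_pmf Hr"
    using set_Hr by auto
  also have "measure Hr \<dots> = measure Hr {{u}}"
    by (simp add: measure_Int_set_pmf)
  also have "\<dots> = q u" by (simp add: measure_pmf_single pmf_Hr_q)
  finally show "pmf (map_pmf (\<lambda>S. u \<in> S) Hr) True = pmf (bernoulli_pmf (q u)) True"
    using q_range[OF u] by simp
qed

lemma map_mt: "u \<in> U \<Longrightarrow> map_pmf (\<lambda>S. u \<in> S) (mt n) = bernoulli_pmf (an n u)"
proof (induction n)
  case 0 then show ?case by (simp add: mt_0 an_def bern0)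
next
  case (Suc n)
  have "map_pmf (\<lambda>S. u \<in> S) (mt (Suc n)) =
     bind_pmf (map_pmf (\<lambda>S. u \<in> S) (mt n)) (\<lambda>b. bind_pmf (map_pmf (\<lambda>S. u \<in> S) Hr) (\<lambda>c. return_pmf (b \<or> c)))"
    unfolding mt_Suc by (simp add: map_bind_pmf bind_map_pmf map_pmf_def bind_assoc_pmf bind_return_pmf)
  also have "\<dots> = bernoulli_pmf (1 - (1 - an n u) * (1 - q u))"
    using Suc map_Hr[OF Suc.prems] an_range[OF Suc.prems, of n] q_range[OF Suc.prems]
    by (simp add: bern_or)
  also have "\<dots> = bernoulli_pmf (an (Suc n) u)"
    using an_Suc[of n] by (simp add: fun_eq_iff)
  finally show ?case .
qed

lemma marg_mt: "u \<in> U \<Longrightarrow> marg (mt n) u = an n u"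
proof -
  assume u: "u \<in> U"
  have "marg (mt n) u = pmf (map_pmf (\<lambda>S. u \<in> S) (mt n)) True"
    unfolding marg_def pmf_map by (rule arg_cong[where f="measure (mt n)"]) auto
  also have "\<dots> = an n u" using map_mt[OF u] an_range[OF u, of n] by simp
  finally show ?thesis .
qed

lemma sumq_le: "sum q U \<le> real (card U) / real T"
proof -
  have "sum q U \<le> (\<Sum>u\<in>U. 1 / real T)" by (intro sum_mono q_le)
  then show ?thesis by simp
qed

lemma tv_bound: "tv_from_indep U (matched_pmf V E p x T) \<le> real (card U) ^ 2 / real T"
proof -
  have mp: "matched_pmf V E p x T = mt T" unfolding matched_pmf_def mt_def ..
  have "tv_from_indep U (mt T) = (1/2) * L1 (Pow U) (mt T) (Bset U (an T))"
    unfolding tv_from_indep_def L1_def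
  proof (intro arg_cong[where f="\<lambda>z. (1/2) * z"] sum.cong refl)
    fix S assume S: "S \<in> Pow U"
    have "prod_marg_mass U (mt T) S = pmf (Bset U (an T)) S"
      unfolding prod_marg_mass_def using S finU an_range
      by (subst pmf_Bset) (auto intro!: prod.cong simp: marg_mt)
    then show "\<bar>pmf (mt T) S - prod_marg_mass U (mt T) S\<bar> = \<bar>pmf (mt T) S - pmf (Bset U (an T)) S\<bar>" by simp
  qed
  also have "\<dots> \<le> (1/2) * (real T * (2 * (sum q U)^2))"
    using main_ind[of T] by simp
  also have "\<dots> = real T * (sum q U)^2" by simp
  also have "\<dots> \<le> real T * (real (card U) / real T)^2"
    using sumq_le q_range by (intro mult_left_mono power_mono sum_nonneg) auto
  also have "\<dots> = real (card U) ^ 2 / real T"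
    using T_pos by (simp add: power2_eq_square)
  finally show ?thesis using mp by simp
qed

lemma marg_formula: "u \<in> U \<Longrightarrow> marg (matched_pmf V E p x T) u = 1 - (1 - xstar_u E x u / real T) ^ T"
  unfolding matched_pmf_def mt_def[symmetric] by (simp add: marg_mt an_def q_def)


end


lemma exp_approx:
  fixes a :: real and T :: nat
  assumes a: "0 \<le> a" "a \<le> 1" and T: "T \<ge> 2"
  shows "\<bar>(1 - (1 - a / real T) ^ T) - (1 - exp (- a))\<bar> \<le> 2 / real T"
proof -
  define y where "y = a / real T"
  have Tp: "real T \<ge> 2" using T by simp
  have y0: "0 \<le> y" using a Tp by (simp add: y_def)
  have y1: "y \<le> 1/2" using a Tp by (simp add: y_def divide_le_eq)
  have ay: "a = real T * y" using Tp by (simp add: y_def)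
  have up: "(1 - y) ^ T \<le> exp (- a)"
  proof -
    have "(1 - y) ^ T \<le> exp (- y) ^ T"
      using y0 y1 exp_ge_add_one_self[of "-y"] by (intro power_mono) auto
    also have "\<dots> = exp (- a)" by (simp add: ay exp_of_nat_mult[symmetric])
    finally show ?thesis .
  qed
  have lo: "exp (- a) - 2 / real T \<le> (1 - y) ^ T"
  proof -
    have l: "- y - 2 * y^2 \<le> ln (1 - y)" using ln_one_minus_pos_lower_bound[OF y0 y1] by simp
    have "(1 - y) ^ T = exp (real T * ln (1 - y))"
      using y1 by (simp add: exp_of_nat_mult exp_ln)
    also have "exp (real T * ln (1 - y)) \<ge> exp (real T * (- y - 2 * y^2))"
      using l Tp by (intro exp_mono mult_left_mono) auto
    finally have A: "exp (- a - 2 * a^2 / real T) \<le> (1 - y) ^ T"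
      using Tp by (simp add: ay power2_eq_square algebra_simps)
    have "exp (- a - 2 * a^2 / real T) = exp (- a) * exp (- (2 * a^2 / real T))"
      by (simp add: exp_add[symmetric])
    also have "\<dots> \<ge> exp (- a) * (1 - 2 * a^2 / real T)"
      using exp_ge_add_one_self[of "- (2 * a^2 / real T)"] by (intro mult_left_mono) auto
    finally have B: "exp (- a) * (1 - 2 * a^2 / real T) \<le> (1 - y) ^ T" using A by simp
    have "exp (- a) * (2 * a^2 / real T) \<le> 1 * (2 / real T)"
    proof (rule mult_mono)
      show "exp (- a) \<le> 1" using a by simp
      show "2 * a^2 / real T \<le> 2 / real T" using a Tp by (intro divide_right_mono) (auto simp: power_le_one)
    qed (use Tp in auto)
    then show ?thesis using B by (simp add: algebra_simps)
  qed
  show ?thesis using up lo by (simp add: y_def[symmetric] abs_if)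
qed

theorem lemma2:
  fixes U :: "nat \<Rightarrow> 'u set" and V :: "nat \<Rightarrow> 'v set" and E :: "nat \<Rightarrow> ('u \<times> 'v) set"
    and p :: "nat \<Rightarrow> 'v \<Rightarrow> real" and x :: "nat \<Rightarrow> ('u \<times> 'v) \<Rightarrow> real"
  assumes finU: "\<And>T. finite (U T)" and finV: "\<And>T. finite (V T)"
    and E_sub: "\<And>T. E T \<subseteq> U T \<times> V T"
    and p_nonneg: "\<And>T v. v \<in> V T \<Longrightarrow> p T v \<ge> 0"
    and p_sum: "\<And>T. sum (p T) (V T) \<le> 1"
    and r_le1: "\<And>T v. v \<in> V T \<Longrightarrow> real T * p T v \<le> 1"
    and x_range: "\<And>T e. e \<in> E T \<Longrightarrow> 0 \<le> x T e \<and> x T e \<le> 1"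
    and x_v: "\<And>T v. v \<in> V T \<Longrightarrow> (\<Sum>e\<in>edges_at_v (E T) v. x T e) \<le> real T * p T v"
    and x_u: "\<And>T u. u \<in> U T \<Longrightarrow> (\<Sum>e\<in>edges_at_u (E T) u. x T e) \<le> 1"
    and U_small: "(\<lambda>T. real (card (U T))) \<in> o(\<lambda>T. sqrt (real T))"
  shows "(\<lambda>T. tv_from_indep (U T) (matched_pmf (V T) (E T) (p T) (x T) T)) \<longlonglongrightarrow> 0
         \<and> (\<forall>\<epsilon>>0. \<forall>\<^sub>F T in sequentially. \<forall>u\<in>U T.
           \<bar>marg (matched_pmf (V T) (E T) (p T) (x T) T) u - (1 - exp (- xstar_u (E T) (x T) u))\<bar> < \<epsilon>)"
proof
  have tvb: "tv_from_indep (U T) (matched_pmf (V T) (E T) (p T) (x T) T) \<le> real (card (U T)) ^ 2 / real T"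
    if "T > 0" for T
    using tv_bound[OF finU finV E_sub p_nonneg p_sum x_range x_v x_u that] by blast
  have tv0: "0 \<le> tv_from_indep (U T) Q" for T and Q :: "'u set pmf"
    unfolding tv_from_indep_def by (intro mult_nonneg_nonneg sum_nonneg) auto
  show "(\<lambda>T. tv_from_indep (U T) (matched_pmf (V T) (E T) (p T) (x T) T)) \<longlonglongrightarrow> 0"
  proof (rule order_tendstoI)
    fix a :: real assume "a < 0"
    then show "\<forall>\<^sub>F T in sequentially. a < tv_from_indep (U T) (matched_pmf (V T) (E T) (p T) (x T) T)"
      using tv0 by (intro always_eventually) (auto intro: less_le_trans)
  next
    fix a :: real assume a: "0 < a"
    have c: "sqrt (a/2) > 0" using a by simp
    have ev1: "\<forall>\<^sub>F T in sequentially. norm (real (card (U T))) \<le> sqrt (a/2) * norm (sqrt (real T))"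
      using landau_o.smallD[OF U_small c] .
    have ev2: "\<forall>\<^sub>F T in sequentially. T > 0" by (simp add: eventually_gt_at_top)
    show "\<forall>\<^sub>F T in sequentially. tv_from_indep (U T) (matched_pmf (V T) (E T) (p T) (x T) T) < a"
      using ev1 ev2
    proof eventually_elim
      case (elim T)
      have Tp: "real T > 0" using elim by simp
      have "real (card (U T)) \<le> sqrt (a/2) * sqrt (real T)" using elim by simp
      then have "real (card (U T)) ^ 2 \<le> (sqrt (a/2) * sqrt (real T)) ^ 2"
        by (intro power_mono) auto
      also have "\<dots> = a/2 * real T" using a by (simp add: power_mult_distrib)
      finally have "real (card (U T)) ^ 2 / real T \<le> a / 2" using Tp by (simp add: divide_le_eq)
      then show ?case using tvb[of T] elim a by linarith
    qed
  qed
next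
  show "\<forall>\<epsilon>>0. \<forall>\<^sub>F T in sequentially. \<forall>u\<in>U T.
           \<bar>marg (matched_pmf (V T) (E T) (p T) (x T) T) u - (1 - exp (- xstar_u (E T) (x T) u))\<bar> < \<epsilon>"
  proof (intro allI impI)
    fix \<epsilon> :: real assume e: "\<epsilon> > 0"
    obtain N :: nat where N: "N > 2 / \<epsilon>" using reals_Archimedean2 by blast
    have "\<forall>\<^sub>F T in sequentially. T \<ge> max 2 N" by (rule eventually_ge_at_top)
    then show "\<forall>\<^sub>F T in sequentially. \<forall>u\<in>U T.
           \<bar>marg (matched_pmf (V T) (E T) (p T) (x T) T) u - (1 - exp (- xstar_u (E T) (x T) u))\<bar> < \<epsilon>"
    proof eventually_elim
      case (elim T)
      have T2: "T \<ge> 2" and TN: "real T \<ge> real N" using elim by auto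
      have Tp: "T > 0" using T2 by simp
      have small: "2 / real T < \<epsilon>"
      proof -
        have "2 / \<epsilon> < real T" using N TN by linarith
        then show ?thesis using e Tp by (simp add: divide_less_eq mult.commute)
      qed
      show ?case
      proof
        fix u assume u: "u \<in> U T"
        have xr: "0 \<le> xstar_u (E T) (x T) u \<and> xstar_u (E T) (x T) u \<le> 1"
          using xstar_range[OF finU finV E_sub p_nonneg p_sum x_range x_v x_u Tp u] .
        have m: "marg (matched_pmf (V T) (E T) (p T) (x T) T) u = 1 - (1 - xstar_u (E T) (x T) u / real T) ^ T"
          using marg_formula[OF finU finV E_sub p_nonneg p_sum x_range x_v x_u Tp u] .
        show "\<bar>marg (matched_pmf (V T) (E T) (p T) (x T) T) u - (1 - exp (- xstar_u (E T) (x T) u))\<bar> < \<epsilon>"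
          unfolding m using exp_approx[of "xstar_u (E T) (x T) u" T] xr T2 small by linarith
      qed
    qed
  qed
qed

end
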